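(* Let $r\geq 2$. Then there exists a constant $c_r$ such that for every $n$, the number of $r$-uniform hypergraphs on a fixed set of $n$ vertices having girth at least $5$ is at most $2^{c_r n^{3/2}}$.
   Context: Hypergraphs are simple (no repeated edges). $C_2$ denotes the graph consisting of two parallel edges between two vertices, and $C_k$ ($k\ge 3$) the cycle of length $k$. For a graph $F$, a hypergraph $H$ is a Berge-$F$ if there is a bijection $f : E(F) \to E(H)$ with $e \subseteq f(e)$ for every $e \in E(F)$. An $r$-uniform hypergraph has girth at least $5$ if it contains no subhypergraph that is a Berge-$C_k$ for any $k\in\{2,3,4\}$ (in particular any two edges share at most one vertex). *)

theory Defs
  imports Complex_Main
begin

text \<open>A hypergraph is a set of edges (so it is simple: no repeated edges).
  It is r-uniform if every edge has exactly r vertices.\<close>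
definition uniform :: "nat \<Rightarrow> 'a set set \<Rightarrow> bool" where
  "uniform r H \<longleftrightarrow> (\<forall>e\<in>H. finite e \<and> card e = r)"

text \<open>This is the unfolding of: some subhypergraph of H is a Berge copy of C_k
  (for k = 2, C_2 is the double edge between two vertices).\<close>
definition has_berge_cycle :: "'a set set \<Rightarrow> nat \<Rightarrow> bool" where
  "has_berge_cycle H k \<longleftrightarrow>
     (\<exists>v :: nat \<Rightarrow> 'a. \<exists>e :: nat \<Rightarrow> 'a set.
        inj_on v {..<k} \<and> inj_on e {..<k} \<and>
        (\<forall>i<k. e i \<in> H \<and> v i \<in> e i \<and> v ((i + 1) mod k) \<in> e i))"

definition girth_ge_5 :: "'a set set \<Rightarrow> bool" where
  "girth_ge_5 H \<longleftrightarrow> (\<forall>k\<in>{2,3,4}. \<not> has_berge_cycle H k)"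

end

theory Submission
  imports Defs
begin

lemma lt2: "(i::nat) < 2 \<longleftrightarrow> i = 0 \<or> i = 1" by auto
lemma lt3: "(i::nat) < 3 \<longleftrightarrow> i = 0 \<or> i = 1 \<or> i = 2" by auto
lemma lt4: "(i::nat) < 4 \<longleftrightarrow> i = 0 \<or> i = 1 \<or> i = 2 \<or> i = 3" by auto

lemma berge2:
  assumes g: "girth_ge_5 H" and e: "e1 \<in> H" "e2 \<in> H" and xy: "x \<noteq> y" "x \<in> e1" "y \<in> e1" "x \<in> e2" "y \<in> e2"
  shows "e1 = e2"
proof (rule ccontr)
  assume ne: "e1 \<noteq> e2"
  define v where "v = (\<lambda>i::nat. if i = 0 then x else y)"
  define f where "f = (\<lambda>i::nat. if i = 0 then e1 else e2)"
  have "inj_on v {..<2}" unfolding inj_on_def lessThan_iff lt2 v_def using xy by auto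
  moreover have "inj_on f {..<2}" unfolding inj_on_def lessThan_iff lt2 f_def using ne by auto
  moreover have "\<forall>i<2. f i \<in> H \<and> v i \<in> f i \<and> v ((i + 1) mod 2) \<in> f i"
    unfolding lt2 v_def f_def using e xy by auto
  ultimately have "has_berge_cycle H 2" unfolding has_berge_cycle_def by blast
  with g show False unfolding girth_ge_5_def by auto
qed

lemma berge3:
  assumes g: "girth_ge_5 H" and e: "e1 \<in> H" "e2 \<in> H" "e3 \<in> H"
    and d: "e1 \<noteq> e2" "e1 \<noteq> e3" "e2 \<noteq> e3" "x \<noteq> y" "x \<noteq> z" "y \<noteq> z"
    and m: "x \<in> e1" "y \<in> e1" "y \<in> e2" "z \<in> e2" "z \<in> e3" "x \<in> e3"
  shows False
proof -
  define v where "v = (\<lambda>i::nat. if i = 0 then x else if i = 1 then y else z)"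
  define f where "f = (\<lambda>i::nat. if i = 0 then e1 else if i = 1 then e2 else e3)"
  have "inj_on v {..<3}" unfolding inj_on_def lessThan_iff lt3 v_def using d by auto
  moreover have "inj_on f {..<3}" unfolding inj_on_def lessThan_iff lt3 f_def using d by auto
  moreover have "\<forall>i<3. f i \<in> H \<and> v i \<in> f i \<and> v ((i + 1) mod 3) \<in> f i"
    unfolding lt3 v_def f_def using e m by auto
  ultimately have "has_berge_cycle H 3" unfolding has_berge_cycle_def by blast
  with g show False unfolding girth_ge_5_def by auto
qed

lemma berge4:
  assumes g: "girth_ge_5 H" and e: "e1 \<in> H" "e2 \<in> H" "e3 \<in> H" "e4 \<in> H"
    and d: "e1 \<noteq> e2" "e1 \<noteq> e3" "e1 \<noteq> e4" "e2 \<noteq> e3" "e2 \<noteq> e4" "e3 \<noteq> e4"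
       "x \<noteq> y" "x \<noteq> z" "x \<noteq> w" "y \<noteq> z" "y \<noteq> w" "z \<noteq> w"
    and m: "x \<in> e1" "y \<in> e1" "y \<in> e2" "z \<in> e2" "z \<in> e3" "w \<in> e3" "w \<in> e4" "x \<in> e4"
  shows False
proof -
  define v where "v = (\<lambda>i::nat. if i = 0 then x else if i = 1 then y else if i = 2 then z else w)"
  define f where "f = (\<lambda>i::nat. if i = 0 then e1 else if i = 1 then e2 else if i = 2 then e3 else e4)"
  have "inj_on v {..<4}" unfolding inj_on_def lessThan_iff lt4 v_def using d by auto
  moreover have "inj_on f {..<4}" unfolding inj_on_def lessThan_iff lt4 f_def using d by auto
  moreover have "\<forall>i<4. f i \<in> H \<and> v i \<in> f i \<and> v ((i + 1) mod 4) \<in> f i"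
    unfolding lt4 v_def f_def using e m by auto
  ultimately have "has_berge_cycle H 4" unfolding has_berge_cycle_def by blast
  with g show False unfolding girth_ge_5_def by auto
qed


definition sh :: "nat set set \<Rightarrow> nat set set" where
  "sh H = {p. card p = 2 \<and> (\<exists>e\<in>H. p \<subseteq> e)}"

definition nb :: "nat set set \<Rightarrow> nat \<Rightarrow> nat set" where
  "nb E x = {y. {x,y} \<in> E}"

lemma sh_iff: "{x,y} \<in> sh H \<longleftrightarrow> x \<noteq> y \<and> (\<exists>e\<in>H. x \<in> e \<and> y \<in> e)"
  unfolding sh_def by (cases "x = y") auto

lemma tri:
  assumes g: "girth_ge_5 H" and d: "x \<noteq> y" "x \<noteq> z" "y \<noteq> z"
    and a: "{x,y} \<in> sh H" "{y,z} \<in> sh H" "{z,x} \<in> sh H"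
  shows "\<exists>e\<in>H. x \<in> e \<and> y \<in> e \<and> z \<in> e"
proof -
  obtain e1 where e1: "e1 \<in> H" "x \<in> e1" "y \<in> e1" using a(1) sh_iff by metis
  obtain e2 where e2: "e2 \<in> H" "y \<in> e2" "z \<in> e2" using a(2) sh_iff by metis
  obtain e3 where e3: "e3 \<in> H" "z \<in> e3" "x \<in> e3" using a(3) sh_iff by metis
  show ?thesis
  proof (cases "e1 = e2")
    case True then show ?thesis using e1 e2 by auto
  next
    case False
    show ?thesis
    proof (cases "e1 = e3")
      case True
      then have "e1 = e2" using berge2[OF g e1(1) e2(1) d(3)] e1 e2 e3 by auto
      then show ?thesis using False by auto
    next
      case n13: False
      show ?thesis
      proof (cases "e2 = e3")
        case True
        then have "e1 = e2" using berge2[OF g e1(1) e2(1) d(1)] e1 e2 e3 by auto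
        then show ?thesis using False by auto
      next
        case False
        then show ?thesis using berge3[OF g e1(1) e2(1) e3(1) \<open>e1\<noteq>e2\<close> n13 False d] e1 e2 e3 by auto
      qed
    qed
  qed
qed

lemma nb_sh: "z \<in> nb (sh H) x \<longleftrightarrow> x \<noteq> z \<and> (\<exists>e\<in>H. x \<in> e \<and> z \<in> e)"
  unfolding nb_def using sh_iff by auto

lemma Q2_sh:
  assumes g: "girth_ge_5 H" and u: "uniform r H" and a: "{x,y} \<in> sh H"
  shows "card (nb (sh H) x \<inter> nb (sh H) y) \<le> r"
proof -
  obtain e where e: "e \<in> H" "x \<in> e" "y \<in> e" and xy: "x \<noteq> y" using a sh_iff by metis
  have "nb (sh H) x \<inter> nb (sh H) y \<subseteq> e"
  proof
    fix z assume z: "z \<in> nb (sh H) x \<inter> nb (sh H) y"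
    then have zx: "z \<noteq> x" "z \<noteq> y" using nb_sh by auto
    have "{y,z} \<in> sh H" "{z,x} \<in> sh H" using z unfolding nb_def by (auto simp: insert_commute)
    then obtain f where f: "f \<in> H" "x \<in> f" "y \<in> f" "z \<in> f"
      using tri[OF g xy zx(1)[symmetric] zx(2)[symmetric] a] by auto
    then have "f = e" using berge2[OF g f(1) e(1) xy] e by auto
    then show "z \<in> e" using f by auto
  qed
  moreover have "finite e" "card e = r" using u e unfolding uniform_def by auto
  ultimately show ?thesis by (metis card_mono)
qed

lemma Q_sh:
  assumes g: "girth_ge_5 H" and xy: "x \<noteq> y" and na: "{x,y} \<notin> sh H"
  shows "card (nb (sh H) x \<inter> nb (sh H) y) \<le> 1"
proof -
  have "z = z'" if z: "z \<in> nb (sh H) x \<inter> nb (sh H) y" and z': "z' \<in> nb (sh H) x \<inter> nb (sh H) y" for z z'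
  proof (rule ccontr)
    assume zz: "z \<noteq> z'"
    have nxy: "\<not> (\<exists>e\<in>H. x \<in> e \<and> y \<in> e)" using na xy sh_iff by auto
    obtain g1 where g1: "g1 \<in> H" "x \<in> g1" "z \<in> g1" and "x \<noteq> z" using z nb_sh by auto
    obtain g2 where g2: "g2 \<in> H" "y \<in> g2" "z \<in> g2" and "y \<noteq> z" using z nb_sh by auto
    obtain g3 where g3: "g3 \<in> H" "y \<in> g3" "z' \<in> g3" and "y \<noteq> z'" using z' nb_sh by auto
    obtain g4 where g4: "g4 \<in> H" "x \<in> g4" "z' \<in> g4" and "x \<noteq> z'" using z' nb_sh by auto
    have n12: "g1 \<noteq> g2" "g1 \<noteq> g3" "g2 \<noteq> g4" "g3 \<noteq> g4" using nxy g1 g2 g3 g4 by auto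
    show False
    proof (cases "g1 = g4")
      case True
      have s1: "{z,y} \<in> sh H" using sh_iff g2 \<open>y \<noteq> z\<close> by blast
      have s2: "{y,z'} \<in> sh H" using sh_iff g3 \<open>y \<noteq> z'\<close> by blast
      have s3: "{z',z} \<in> sh H" using sh_iff g1 g4 True zz by blast
      obtain e where e: "e \<in> H" "z \<in> e" "y \<in> e" "z' \<in> e"
        using tri[OF g \<open>y \<noteq> z\<close>[symmetric] zz \<open>y \<noteq> z'\<close> s1 s2 s3] by auto
      then have "e = g1" using berge2[OF g e(1) g1(1) zz] g4 True g1 by auto
      then show False using nxy e g1 by auto
    next
      case n14: False
      show False
      proof (cases "g2 = g3")
        case True
        have s1: "{z,x} \<in> sh H" using sh_iff g1 \<open>x \<noteq> z\<close> by blast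
        have s2: "{x,z'} \<in> sh H" using sh_iff g4 \<open>x \<noteq> z'\<close> by blast
        have s3: "{z',z} \<in> sh H" using sh_iff g2 g3 True zz by blast
        obtain e where e: "e \<in> H" "z \<in> e" "x \<in> e" "z' \<in> e"
          using tri[OF g \<open>x \<noteq> z\<close>[symmetric] zz \<open>x \<noteq> z'\<close> s1 s2 s3] by auto
        then have "e = g2" using berge2[OF g e(1) g2(1) zz] g3 True g2 by auto
        then show False using nxy e g2 by auto
      next
        case False
        show False
          using berge4[OF g g1(1) g2(1) g3(1) g4(1) n12(1) n12(2) n14 False n12(3) n12(4)
              \<open>x \<noteq> z\<close> xy \<open>x \<noteq> z'\<close> \<open>y \<noteq> z\<close>[symmetric] zz \<open>y \<noteq> z'\<close>] g1 g2 g3 g4 by auto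
      qed
    qed
  qed
  then show ?thesis
    by (cases "finite (nb (sh H) x \<inter> nb (sh H) y)") (auto simp: card_le_Suc0_iff_eq)
qed

lemma sh_inj:
  assumes g: "girth_ge_5 H" and u: "uniform r H" and r: "r \<ge> 2"
  shows "H = {e. finite e \<and> card e = r \<and> (\<forall>x\<in>e. \<forall>y\<in>e. x \<noteq> y \<longrightarrow> {x,y} \<in> sh H)}"
proof
  show "H \<subseteq> {e. finite e \<and> card e = r \<and> (\<forall>x\<in>e. \<forall>y\<in>e. x \<noteq> y \<longrightarrow> {x,y} \<in> sh H)}" using u unfolding uniform_def by (auto simp: sh_iff)
next
  show "{e. finite e \<and> card e = r \<and> (\<forall>x\<in>e. \<forall>y\<in>e. x \<noteq> y \<longrightarrow> {x,y} \<in> sh H)} \<subseteq> H"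
  proof
    fix e assume "e \<in> {e. finite e \<and> card e = r \<and> (\<forall>x\<in>e. \<forall>y\<in>e. x \<noteq> y \<longrightarrow> {x,y} \<in> sh H)}"
    then have e: "finite e" "card e = r" "\<And>x y. x\<in>e \<Longrightarrow> y\<in>e \<Longrightarrow> x \<noteq> y \<Longrightarrow> {x,y} \<in> sh H" by auto
    have "\<not> card e \<le> Suc 0" using e(2) r by simp
    then obtain x y where xy: "x \<in> e" "y \<in> e" "x \<noteq> y"
      using card_le_Suc0_iff_eq[OF e(1)] by blast
    obtain f where f: "f \<in> H" "x \<in> f" "y \<in> f" using e(3)[OF xy] sh_iff by metis
    have "e \<subseteq> f"
    proof
      fix z assume z: "z \<in> e"
      show "z \<in> f"
      proof (cases "z = x \<or> z = y")
        case True then show ?thesis using f by auto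
      next
        case False
        then have zz: "x \<noteq> z" "y \<noteq> z" by auto
        obtain h where h: "h \<in> H" "x \<in> h" "y \<in> h" "z \<in> h"
          using tri[OF g xy(3) zz e(3)[OF xy] e(3)[OF xy(2) z zz(2)] e(3)[OF z xy(1) zz(1)[symmetric]]] by blast
        then have "h = f" using berge2[OF g h(1) f(1) xy(3)] f by auto
        then show ?thesis using h by auto
      qed
    qed
    moreover have "finite f" "card f = r" using u f unfolding uniform_def by auto
    ultimately have "e = f" using e by (metis card_subset_eq)
    then show "e \<in> H" using f by auto
  qed
qed


definition pick :: "(nat \<Rightarrow> nat \<Rightarrow> bool) \<Rightarrow> real \<Rightarrow> nat set \<Rightarrow> nat" where
  "pick R \<beta> A = (SOME y. y \<in> A \<and> \<beta> * card A \<le> card {z\<in>A. R y z})"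

fun alg :: "(nat \<Rightarrow> nat \<Rightarrow> bool) \<Rightarrow> real \<Rightarrow> real \<Rightarrow> nat set \<Rightarrow> nat \<Rightarrow> nat set \<Rightarrow> nat set \<times> nat set" where
  "alg R T \<beta> P 0 A = ({}, A)"
| "alg R T \<beta> P (Suc n) A = (if real (card A) < T then ({}, A) else
     (let y = pick R \<beta> A in
      if y \<in> P then (let r = alg R T \<beta> P n (A - insert y {z\<in>A. R y z}) in (insert y (fst r), snd r))
      else alg R T \<beta> P n (A - {y})))"

locale cont =
  fixes R :: "nat \<Rightarrow> nat \<Rightarrow> bool" and T \<beta> :: real and W :: "nat set"
  assumes finW: "finite W" and Tpos: "T > 0" and \<beta>1: "\<beta> \<le> 1"
    and ss: "\<And>A. A \<subseteq> W \<Longrightarrow> T \<le> card A \<Longrightarrow> \<exists>y\<in>A. \<beta> * card A \<le> card {z\<in>A. R y z}"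
begin

lemma pick: assumes "A \<subseteq> W" "T \<le> card A"
  shows "pick R \<beta> A \<in> A" "\<beta> * card A \<le> card {z\<in>A. R (pick R \<beta> A) z}"
proof -
  have "\<exists>y. y \<in> A \<and> \<beta> * card A \<le> card {z\<in>A. R y z}" using ss[OF assms] by blast
  from someI_ex[OF this] show "pick R \<beta> A \<in> A" "\<beta> * card A \<le> card {z\<in>A. R (pick R \<beta> A) z}"
    unfolding pick_def by auto
qed

lemma alg_sub: "A \<subseteq> W \<Longrightarrow> snd (alg R T \<beta> P n A) \<subseteq> A \<and> fst (alg R T \<beta> P n A) \<subseteq> A \<inter> P"
proof (induction n arbitrary: A)
  case 0 then show ?case by simp
next
  case (Suc n)
  show ?case
  proof (cases "real (card A) < T")
    case True then show ?thesis by simp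
  next
    case False
    define y where "y = pick R \<beta> A"
    have y: "y \<in> A" using pick(1)[OF Suc.prems] False y_def by simp
    show ?thesis
    proof (cases "y \<in> P")
      case True
      have "A - insert y {z\<in>A. R y z} \<subseteq> W" using Suc.prems by auto
      from Suc.IH[OF this] show ?thesis using False True y
        by (simp add: Let_def y_def[symmetric]) blast
    next
      case f2: False
      have "A - {y} \<subseteq> W" using Suc.prems by auto
      from Suc.IH[OF this] show ?thesis using False f2 y
        by (simp add: Let_def y_def[symmetric]) blast
    qed
  qed
qed

lemma alg_small: "A \<subseteq> W \<Longrightarrow> card A \<le> n \<Longrightarrow> real (card (snd (alg R T \<beta> P n A))) < T"
proof (induction n arbitrary: A)
  case 0 then show ?case using Tpos by simp
next
  case (Suc n)
  have finA: "finite A" using Suc.prems finW finite_subset by blast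
  show ?case
  proof (cases "real (card A) < T")
    case True then show ?thesis by simp
  next
    case False
    define y where "y = pick R \<beta> A"
    have y: "y \<in> A" using pick(1)[OF Suc.prems(1)] False y_def by simp
    show ?thesis
    proof (cases "y \<in> P")
      case True
      have s: "A - insert y {z\<in>A. R y z} \<subseteq> W" using Suc.prems by auto
      have "card (A - insert y {z\<in>A. R y z}) \<le> n"
      proof -
        have "card (A - insert y {z\<in>A. R y z}) \<le> card (A - {y})" by (rule card_mono) (use finA in auto)
        also have "\<dots> = card A - 1" using y finA by simp
        finally show ?thesis using Suc.prems(2) by simp
      qed
      from Suc.IH[OF s this] show ?thesis using False True
        by (simp add: Let_def y_def[symmetric])
    next
      case f2: False
      have s: "A - {y} \<subseteq> W" using Suc.prems by auto
      have "card (A - {y}) \<le> n" using y finA Suc.prems(2) by simp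
      from Suc.IH[OF s this] show ?thesis using False f2
        by (simp add: Let_def y_def[symmetric])
    qed
  qed
qed

lemma alg_cover:
  assumes ind: "\<And>a b. a \<in> P \<Longrightarrow> b \<in> P \<Longrightarrow> \<not> R a b"
  shows "A \<subseteq> W \<Longrightarrow> P \<inter> A \<subseteq> fst (alg R T \<beta> P n A) \<union> snd (alg R T \<beta> P n A)"
proof (induction n arbitrary: A)
  case 0 then show ?case by simp
next
  case (Suc n)
  show ?case
  proof (cases "real (card A) < T")
    case True then show ?thesis by simp
  next
    case False
    define y where "y = pick R \<beta> A"
    have y: "y \<in> A" using pick(1)[OF Suc.prems] False y_def by simp
    show ?thesis
    proof (cases "y \<in> P")
      case True
      have s: "A - insert y {z\<in>A. R y z} \<subseteq> W" using Suc.prems by auto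
      have "P \<inter> A \<subseteq> insert y (P \<inter> (A - insert y {z\<in>A. R y z}))" using ind True by auto
      with Suc.IH[OF s] show ?thesis using False True
        by (simp add: Let_def y_def[symmetric]) blast
    next
      case f2: False
      have s: "A - {y} \<subseteq> W" using Suc.prems by auto
      have "P \<inter> A \<subseteq> P \<inter> (A - {y})" using f2 by auto
      with Suc.IH[OF s] show ?thesis using False f2
        by (simp add: Let_def y_def[symmetric]) blast
    qed
  qed
qed

lemma alg_det:
  "A \<subseteq> W \<Longrightarrow> fst (alg R T \<beta> P n A) \<subseteq> Q \<Longrightarrow> Q \<subseteq> P \<Longrightarrow> alg R T \<beta> Q n A = alg R T \<beta> P n A"
proof (induction n arbitrary: A)
  case 0 then show ?case by simp
next
  case (Suc n)
  show ?case
  proof (cases "real (card A) < T")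
    case True then show ?thesis by simp
  next
    case False
    define y where "y = pick R \<beta> A"
    show ?thesis
    proof (cases "y \<in> P")
      case True
      have s: "A - insert y {z\<in>A. R y z} \<subseteq> W" using Suc.prems by auto
      have fP: "fst (alg R T \<beta> P (Suc n) A) = insert y (fst (alg R T \<beta> P n (A - insert y {z\<in>A. R y z})))"
        using False True by (simp add: Let_def y_def[symmetric])
      then have yQ: "y \<in> Q" using Suc.prems(2) by auto
      have "alg R T \<beta> Q n (A - insert y {z\<in>A. R y z}) = alg R T \<beta> P n (A - insert y {z\<in>A. R y z})"
        using Suc.IH[OF s] fP Suc.prems(2,3) by auto
      then show ?thesis using False True yQ by (simp add: Let_def y_def[symmetric])
    next
      case f2: False
      have s: "A - {y} \<subseteq> W" using Suc.prems by auto
      have yQ: "y \<notin> Q" using f2 Suc.prems(3) by auto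
      have fP: "fst (alg R T \<beta> P (Suc n) A) = fst (alg R T \<beta> P n (A - {y}))"
        using False f2 by (simp add: Let_def y_def[symmetric])
      have "alg R T \<beta> Q n (A - {y}) = alg R T \<beta> P n (A - {y})"
        using Suc.IH[OF s] fP Suc.prems(2,3) by auto
      then show ?thesis using False f2 yQ by (simp add: Let_def y_def[symmetric])
    qed
  qed
qed

lemma alg_count:
  "A \<subseteq> W \<Longrightarrow> card (fst (alg R T \<beta> P n A)) = Suc j \<Longrightarrow> T \<le> (1 - \<beta>) ^ j * card A"
proof (induction n arbitrary: A j)
  case 0 then show ?case by simp
next
  case (Suc n)
  have finA: "finite A" using Suc.prems finW finite_subset by blast
  show ?case
  proof (cases "real (card A) < T")
    case True then show ?thesis using Suc.prems by simp
  next
    case False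
    define y where "y = pick R \<beta> A"
    have y: "y \<in> A" using pick(1)[OF Suc.prems(1)] False y_def by simp
    show ?thesis
    proof (cases "y \<in> P")
      case True
      define A' where "A' = A - insert y {z\<in>A. R y z}"
      have s: "A' \<subseteq> W" using Suc.prems A'_def by auto
      have fP: "fst (alg R T \<beta> P (Suc n) A) = insert y (fst (alg R T \<beta> P n A'))"
        using False True by (simp add: Let_def y_def[symmetric] A'_def)
      have sub: "fst (alg R T \<beta> P n A') \<subseteq> A'" using alg_sub[OF s] by auto
      then have yn: "y \<notin> fst (alg R T \<beta> P n A')" unfolding A'_def by blast
      have fin: "finite (fst (alg R T \<beta> P n A'))" using finite_subset[OF sub finite_subset[OF s finW]] .
      have cj: "card (fst (alg R T \<beta> P n A')) = j" using Suc.prems(2) fP yn fin by simp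
      have cA': "real (card A') \<le> (1 - \<beta>) * card A"
      proof -
        have "card A' = card A - card (insert y {z\<in>A. R y z})"
          unfolding A'_def by (rule card_Diff_subset) (use finA y in auto)
        moreover have "card {z\<in>A. R y z} \<le> card (insert y {z\<in>A. R y z})"
          by (rule card_mono) (use finA in auto)
        moreover have "card (insert y {z\<in>A. R y z}) \<le> card A"
          by (rule card_mono) (use finA y in auto)
        moreover have "\<beta> * card A \<le> card {z\<in>A. R y z}" using pick(2)[OF Suc.prems(1)] False y_def by simp
        ultimately have "real (card A') = real (card A) - real (card (insert y {z\<in>A. R y z}))"
          and "\<beta> * card A \<le> real (card (insert y {z\<in>A. R y z}))" by (simp_all add: of_nat_diff)
        then show ?thesis by (simp add: algebra_simps)
      qed
      show ?thesis
      proof (cases j)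
        case 0 then show ?thesis using False by simp
      next
        case jS: (Suc j')
        have "T \<le> (1 - \<beta>) ^ j' * card A'" using Suc.IH[OF s, of j'] cj jS by simp
        also have "\<dots> \<le> (1 - \<beta>) ^ j' * ((1 - \<beta>) * card A)"
          by (rule mult_left_mono[OF cA']) (use \<beta>1 in simp)
        finally show ?thesis using jS by (simp add: algebra_simps)
      qed
    next
      case f2: False
      have s: "A - {y} \<subseteq> W" using Suc.prems by auto
      have fP: "fst (alg R T \<beta> P (Suc n) A) = fst (alg R T \<beta> P n (A - {y}))"
        using False f2 by (simp add: Let_def y_def[symmetric])
      have "T \<le> (1 - \<beta>) ^ j * card (A - {y})" using Suc.IH[OF s] fP Suc.prems(2) by simp
      also have "\<dots> \<le> (1 - \<beta>) ^ j * card A"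
        by (rule mult_left_mono) (use \<beta>1 finA card_Diff1_le[of A y] in simp_all)
      finally show ?thesis .
    qed
  qed
qed

end


lemma card_le_sum_binom:
  assumes "finite U"
  shows "card {X. X \<subseteq> U \<and> card X \<le> d} \<le> (\<Sum>j\<le>d. card U choose j)"
proof -
  have "{X. X \<subseteq> U \<and> card X \<le> d} = (\<Union>j\<in>{..d}. {X. X \<subseteq> U \<and> card X = j})" by auto
  then have "card {X. X \<subseteq> U \<and> card X \<le> d} \<le> (\<Sum>j\<le>d. card {X. X \<subseteq> U \<and> card X = j})"
    using card_UN_le[of "{..d}" "\<lambda>j. {X. X \<subseteq> U \<and> card X = j}"] by simp
  also have "\<dots> = (\<Sum>j\<le>d. card U choose j)" using n_subsets[OF assms] by simp
  finally show ?thesis .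
qed

lemma binom_sum_le:
  fixes lam :: real
  assumes l: "0 < lam" "lam \<le> 1"
  shows "real (\<Sum>j\<le>d. t choose j) \<le> exp (lam * t) / lam ^ d"
proof -
  have "real (\<Sum>j\<le>d. t choose j) = (\<Sum>j\<le>d. real (t choose j))" by simp
  also have "\<dots> \<le> (\<Sum>j\<le>d. real (t choose j) * lam ^ j / lam ^ d)"
  proof (rule sum_mono)
    fix j assume "j \<in> {..d}"
    then have "lam ^ d \<le> lam ^ j" using l by (intro power_decreasing) auto
    then have "1 \<le> lam ^ j / lam ^ d" using l by simp
    then show "real (t choose j) \<le> real (t choose j) * lam ^ j / lam ^ d"
      using mult_left_mono[of 1 "lam ^ j / lam ^ d" "real (t choose j)"] by simp
  qed
  also have "\<dots> = (\<Sum>j\<le>d. real (t choose j) * lam ^ j) / lam ^ d"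
    by (simp add: sum_divide_distrib)
  also have "(\<Sum>j\<le>d. real (t choose j) * lam ^ j) \<le> (\<Sum>j\<le>max d t. real (t choose j) * lam ^ j)"
    by (rule sum_mono2) (use l in auto)
  also have "(\<Sum>j\<le>max d t. real (t choose j) * lam ^ j) = (\<Sum>j\<le>t. real (t choose j) * lam ^ j)"
    by (rule sum.mono_neutral_right) auto
  also have "\<dots> = (lam + 1) ^ t" using binomial_ring[of lam 1 t] by simp
  also have "\<dots> \<le> exp lam ^ t"
  proof (rule power_mono)
    have "1 + lam \<le> exp lam" by (rule exp_ge_add_one_self)
    then show "lam + 1 \<le> exp lam" by linarith
    show "0 \<le> lam + 1" using l by linarith
  qed
  also have "\<dots> = exp (lam * t)" by (simp add: exp_of_nat_mult[symmetric] mult.commute)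
  finally show ?thesis using l by (simp add: divide_right_mono)
qed

lemma card_small_subsets:
  fixes lam :: real
  assumes "finite U" "0 < lam" "lam \<le> 1"
  shows "real (card {X. X \<subseteq> U \<and> card X \<le> d}) \<le> exp (lam * card U) / lam ^ d"
proof -
  have "real (card {X. X \<subseteq> U \<and> card X \<le> d}) \<le> real (\<Sum>j\<le>d. card U choose j)"
    using card_le_sum_binom[OF assms(1), of d] by (simp only: of_nat_le_iff)
  also have "\<dots> \<le> exp (lam * card U) / lam ^ d" by (rule binom_sum_le[OF assms(2,3)])
  finally show ?thesis .
qed

lemma card_fp:
  assumes "finite W"
  shows "card {X. X \<subseteq> W \<and> card X \<le> k} \<le> (card W + 1) ^ k"
proof -
  have "card {X. X \<subseteq> W \<and> card X \<le> k} \<le> (\<Sum>j\<le>k. card W choose j)" by (rule card_le_sum_binom[OF assms])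
  also have "\<dots> \<le> (\<Sum>j\<le>k. (k choose j) * card W ^ j)"
  proof (rule sum_mono)
    fix j assume j: "j \<in> {..k}"
    have "card W choose j \<le> card W ^ j"
      by (cases "j \<le> card W") (auto simp: binomial_le_pow binomial_eq_0)
    also have "\<dots> \<le> (k choose j) * card W ^ j" using j by (simp add: Suc_leI)
    finally show "card W choose j \<le> (k choose j) * card W ^ j" .
  qed
  also have "\<dots> = (card W + 1) ^ k" using binomial_ring[of "card W" 1 k] by (simp add: mult.commute)
  finally show ?thesis .
qed


lemma cs_sum:
  fixes f :: "'a \<Rightarrow> real"
  assumes "finite I"
  shows "(\<Sum>i\<in>I. f i)\<^sup>2 \<le> card I * (\<Sum>i\<in>I. (f i)\<^sup>2)"
proof -
  define s where "s = (\<Sum>i\<in>I. f i)"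
  define q where "q = (\<Sum>i\<in>I. (f i)\<^sup>2)"
  have e1: "(\<Sum>i\<in>I. \<Sum>j\<in>I. (f i)\<^sup>2) = card I * q"
    by (simp add: q_def sum_distrib_left)
  have e2: "(\<Sum>i\<in>I. \<Sum>j\<in>I. (f j)\<^sup>2) = card I * q"
    by (simp add: q_def)
  have e3: "(\<Sum>i\<in>I. \<Sum>j\<in>I. f i * f j) = s * s"
    by (simp add: s_def sum_product)
  have "0 \<le> (\<Sum>i\<in>I. \<Sum>j\<in>I. (f i - f j)\<^sup>2)" by (intro sum_nonneg) auto
  also have "\<dots> = (\<Sum>i\<in>I. \<Sum>j\<in>I. (f i)\<^sup>2 + (f j)\<^sup>2 - 2 * (f i * f j))"
    by (rule sum.cong[OF refl], rule sum.cong[OF refl]) (simp add: power2_eq_square algebra_simps)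
  also have "\<dots> = (\<Sum>i\<in>I. \<Sum>j\<in>I. (f i)\<^sup>2) + (\<Sum>i\<in>I. \<Sum>j\<in>I. (f j)\<^sup>2) - 2 * (\<Sum>i\<in>I. \<Sum>j\<in>I. f i * f j)"
    by (simp only: sum.distrib sum_subtractf sum_distrib_left)
  also have "\<dots> = 2 * card I * q - 2 * (s * s)" using e1 e2 e3 by simp
  finally show ?thesis unfolding s_def[symmetric] q_def[symmetric] by (simp add: power2_eq_square)
qed

definition Rc :: "nat set set \<Rightarrow> nat \<Rightarrow> nat \<Rightarrow> bool" where
  "Rc E x y \<longleftrightarrow> x \<noteq> y \<and> {x,y} \<notin> E \<and> (\<exists>z. z \<in> nb E x \<and> z \<in> nb E y)"

definition gclass :: "nat \<Rightarrow> nat set \<Rightarrow> nat set set set" where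
  "gclass K V = {E. E \<subseteq> {p. p \<subseteq> V \<and> card p = 2} \<and>
     (\<forall>x y. x \<noteq> y \<and> {x,y} \<notin> E \<longrightarrow> card (nb E x \<inter> nb E y) \<le> 1) \<and>
     (\<forall>x y. {x,y} \<in> E \<longrightarrow> card (nb E x \<inter> nb E y) \<le> K)}"

lemma nb_sym: "y \<in> nb E x \<longleftrightarrow> x \<in> nb E y"
  unfolding nb_def by (simp add: insert_commute)

lemma gclass_nb:
  assumes "E \<in> gclass K V" "y \<in> nb E x"
  shows "y \<in> V" "x \<in> V" "x \<noteq> y"
proof -
  have "{x,y} \<in> E" using assms(2) unfolding nb_def by simp
  then have "{x,y} \<subseteq> V" "card {x,y} = 2" using assms(1) unfolding gclass_def by auto
  then show "y \<in> V" "x \<in> V" "x \<noteq> y" by (auto simp: card_insert_if split: if_splits)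
qed

lemma gclass_nbV: "E \<in> gclass K V \<Longrightarrow> nb E x \<subseteq> V"
  using gclass_nb by blast

lemma supersat:
  fixes \<delta> :: nat
  assumes G: "E \<in> gclass K W" and finW: "finite W" and Wne: "W \<noteq> {}"
    and dpos: "1 \<le> \<delta>" and mind: "\<And>u. u \<in> W \<Longrightarrow> \<delta> \<le> card (nb E u)"
    and AW: "A \<subseteq> W" and big: "2 * (real K + 1) * real (card W) / real \<delta> \<le> real (card A)"
  shows "\<exists>y\<in>A. real \<delta> ^ 2 / (2 * real (card W)) * real (card A) \<le> real (card {z\<in>A. Rc E y z})"
proof -
  define m where "m = card W"
  have m0: "m > 0" using finW Wne m_def by (simp add: card_gt_0_iff)
  have finA: "finite A" using AW finW finite_subset by blast
  define a where "a = card A"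
  have "0 < 2 * (real K + 1) * real (card W) / real \<delta>" using m0 dpos m_def by simp
  then have "0 < real (card A)" using big by linarith
  then have "0 < real a" using a_def by simp
  then have a0: "a > 0" by simp
  define D where "D = (\<Sum>x\<in>A. card (nb E x))"
  define P where "P = (\<Sum>x\<in>A. card {y\<in>A. Rc E x y})"
  define dz where "dz z = card {x\<in>A. x \<in> nb E z}" for z
  have finnb: "finite (nb E x)" for x using gclass_nbV[OF G] finW finite_subset by blast
  have Dge0: "\<delta> * a \<le> D"
  proof -
    have "\<delta> * a = (\<Sum>x\<in>A. \<delta>)" using a_def by simp
    also have "\<dots> \<le> (\<Sum>x\<in>A. card (nb E x))" by (rule sum_mono) (use mind AW in auto)
    finally show ?thesis by (simp add: D_def)
  qed
  then have Dge: "real \<delta> * real a \<le> real D" by (metis of_nat_le_iff of_nat_mult)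
  have s1: "(\<Sum>z\<in>W. dz z) = D"
  proof -
    have "(\<Sum>z\<in>W. dz z) = (\<Sum>z\<in>W. \<Sum>x\<in>{x\<in>A. x \<in> nb E z}. (1::nat))" by (simp add: dz_def)
    also have "\<dots> = (\<Sum>x\<in>A. \<Sum>z\<in>{z\<in>W. x \<in> nb E z}. (1::nat))"
      by (rule sum.swap_restrict[OF finW finA])
    also have "\<dots> = (\<Sum>x\<in>A. card (nb E x))"
    proof (rule sum.cong[OF refl])
      fix x assume "x \<in> A"
      have "{z\<in>W. x \<in> nb E z} = nb E x" using gclass_nbV[OF G] nb_sym by blast
      then show "(\<Sum>z\<in>{z\<in>W. x \<in> nb E z}. (1::nat)) = card (nb E x)" by simp
    qed
    finally show ?thesis by (simp add: D_def)
  qed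
  define g where "g x z = card {y\<in>{y\<in>A. y \<in> nb E z}. y \<noteq> x \<and> {x,y} \<notin> E}" for x z
  have s2: "dz z * dz z \<le> (\<Sum>x\<in>{x\<in>A. x \<in> nb E z}. 1 + K + g x z)" if z: "z \<in> W" for z
  proof -
    have "dz z * dz z = (\<Sum>x\<in>{x\<in>A. x \<in> nb E z}. dz z)" by (simp add: dz_def)
    also have "\<dots> \<le> (\<Sum>x\<in>{x\<in>A. x \<in> nb E z}. 1 + K + g x z)"
    proof (rule sum_mono)
      fix x assume x: "x \<in> {x\<in>A. x \<in> nb E z}"
      have sub: "{x\<in>A. x \<in> nb E z} \<subseteq> {x} \<union> (nb E x \<inter> nb E z) \<union> {y\<in>{y\<in>A. y \<in> nb E z}. y \<noteq> x \<and> {x,y} \<notin> E}"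
        unfolding nb_def by auto
      have "{x,z} \<in> E" using x unfolding nb_def by (simp add: insert_commute)
      then have cK: "card (nb E x \<inter> nb E z) \<le> K" using G unfolding gclass_def by blast
      have "dz z \<le> card ({x} \<union> (nb E x \<inter> nb E z) \<union> {y\<in>{y\<in>A. y \<in> nb E z}. y \<noteq> x \<and> {x,y} \<notin> E})"
        unfolding dz_def by (rule card_mono) (use finA finnb in \<open>auto simp: nb_def\<close>)
      also have "\<dots> \<le> card ({x} \<union> (nb E x \<inter> nb E z)) + g x z"
        unfolding g_def by (rule card_Un_le)
      also have "card ({x} \<union> (nb E x \<inter> nb E z)) \<le> 1 + card (nb E x \<inter> nb E z)"
        using card_Un_le[of "{x}" "nb E x \<inter> nb E z"] by simp
      finally show "dz z \<le> 1 + K + g x z" using cK by linarith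
    qed
    finally show ?thesis .
  qed
  have s3: "(\<Sum>z\<in>W. \<Sum>x\<in>{x\<in>A. x \<in> nb E z}. g x z) = (\<Sum>x\<in>A. \<Sum>z\<in>{z\<in>W. x \<in> nb E z}. g x z)"
    by (rule sum.swap_restrict[OF finW finA])
  have s4: "(\<Sum>z\<in>{z\<in>W. x \<in> nb E z}. g x z) \<le> card {y\<in>A. Rc E x y}" if x: "x \<in> A" for x
  proof -
    define Z where "Z = {z\<in>W. x \<in> nb E z}"
    define Gs where "Gs z = {y\<in>{y\<in>A. y \<in> nb E z}. y \<noteq> x \<and> {x,y} \<notin> E}" for z
    have finZ: "finite Z" using finW Z_def by simp
    have finG: "\<forall>z\<in>Z. finite (Gs z)" using finA Gs_def by simp
    have "(\<Sum>z\<in>Z. g x z) = card (SIGMA z:Z. Gs z)"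
      using card_SigmaI[OF finZ finG] by (simp add: g_def Gs_def)
    also have "\<dots> \<le> card {y\<in>A. Rc E x y}"
    proof (rule card_inj_on_le)
      show "inj_on snd (SIGMA z:Z. Gs z)"
      proof (rule inj_onI)
        fix p q assume p: "p \<in> (SIGMA z:Z. Gs z)" and q: "q \<in> (SIGMA z:Z. Gs z)" and e: "snd p = snd q"
        obtain z y where pz: "p = (z,y)" by (cases p)
        obtain z' y' where qz: "q = (z',y')" by (cases q)
        have yy: "y' = y" using e pz qz by simp
        have h: "z \<in> nb E x" "z \<in> nb E y" "z' \<in> nb E x" "z' \<in> nb E y" "y \<noteq> x" "{x,y} \<notin> E"
          using p q pz qz yy unfolding Z_def Gs_def by (auto simp: nb_sym)
        have "card (nb E x \<inter> nb E y) \<le> 1" using G h(5,6) unfolding gclass_def by auto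
        then have "z = z'" using h(1-4) finnb
          by (metis (no_types, lifting) IntI One_nat_def card_le_Suc0_iff_eq finite_Int)
        then show "p = q" using pz qz yy by simp
      qed
      show "snd ` (SIGMA z:Z. Gs z) \<subseteq> {y\<in>A. Rc E x y}"
      proof
        fix y assume "y \<in> snd ` (SIGMA z:Z. Gs z)"
        then obtain z where "z \<in> Z" "y \<in> Gs z" by auto
        then show "y \<in> {y\<in>A. Rc E x y}" unfolding Z_def Gs_def Rc_def by (auto simp: nb_sym)
      qed
      show "finite {y\<in>A. Rc E x y}" using finA by simp
    qed
    finally show ?thesis using Z_def by simp
  qed
  have sq: "(\<Sum>z\<in>W. real (dz z) ^ 2) \<le> (1 + K) * D + P"
  proof -
    have "(\<Sum>z\<in>W. dz z * dz z) \<le> (\<Sum>z\<in>W. \<Sum>x\<in>{x\<in>A. x \<in> nb E z}. 1 + K + g x z)"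
      by (rule sum_mono) (use s2 in auto)
    also have "\<dots> = (\<Sum>z\<in>W. (1 + K) * dz z + (\<Sum>x\<in>{x\<in>A. x \<in> nb E z}. g x z))"
    proof (rule sum.cong[OF refl])
      fix z
      have "(\<Sum>x\<in>{x\<in>A. x \<in> nb E z}. 1 + K + g x z) = (\<Sum>x\<in>{x\<in>A. x \<in> nb E z}. 1 + K) + (\<Sum>x\<in>{x\<in>A. x \<in> nb E z}. g x z)"
        by (rule sum.distrib)
      then show "(\<Sum>x\<in>{x\<in>A. x \<in> nb E z}. 1 + K + g x z) = (1 + K) * dz z + (\<Sum>x\<in>{x\<in>A. x \<in> nb E z}. g x z)"
        by (simp add: dz_def mult.commute)
    qed
    also have "\<dots> = (\<Sum>z\<in>W. (1 + K) * dz z) + (\<Sum>z\<in>W. \<Sum>x\<in>{x\<in>A. x \<in> nb E z}. g x z)"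
      by (rule sum.distrib)
    also have "\<dots> \<le> (1 + K) * D + P"
    proof -
      have "(\<Sum>z\<in>W. (1 + K) * dz z) = (1 + K) * D" using s1 by (simp only: sum_distrib_left[symmetric])
      moreover have "(\<Sum>x\<in>A. \<Sum>z\<in>{z\<in>W. x \<in> nb E z}. g x z) \<le> P"
        unfolding P_def by (rule sum_mono) (use s4 in auto)
      ultimately show ?thesis using s3 by simp
    qed
    finally have "(\<Sum>z\<in>W. dz z * dz z) \<le> (1 + K) * D + P" .
    then have "real (\<Sum>z\<in>W. dz z * dz z) \<le> real ((1 + K) * D + P)" by (simp only: of_nat_le_iff)
    then show ?thesis by (simp add: power2_eq_square)
  qed
  have cs: "(real D)\<^sup>2 \<le> m * (\<Sum>z\<in>W. real (dz z) ^ 2)"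
  proof -
    have hh: "real D = (\<Sum>z\<in>W. real (dz z))" unfolding s1[symmetric] by (rule of_nat_sum)
    show ?thesis using cs_sum[OF finW, of "\<lambda>z. real (dz z)"] m_def unfolding hh by simp
  qed
  have key: "(real D)\<^sup>2 \<le> real m * ((1 + real K) * real D + real P)"
  proof -
    have "real m * (\<Sum>z\<in>W. real (dz z) ^ 2) \<le> real m * real ((1 + K) * D + P)"
      by (rule mult_left_mono[OF sq]) simp
    moreover have "(1 + real K) * real D + real P = real D + real K * real D + real P" by (simp add: algebra_simps)
    ultimately show ?thesis using cs by simp
  qed
  have DK: "2 * (real K + 1) * real m \<le> real D"
  proof -
    have "2 * (real K + 1) * real m = real \<delta> * (2 * (real K + 1) * real m / real \<delta>)" using dpos by simp
    also have "\<dots> \<le> real \<delta> * real a" using big a_def m_def by (intro mult_left_mono) auto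
    finally show ?thesis using Dge by linarith
  qed
  have "real m * ((1 + real K) * real D) \<le> (real D)\<^sup>2 / 2"
  proof -
    have "real m * ((1 + real K) * real D) = (2 * (real K + 1) * real m) * real D / 2" by (simp add: algebra_simps)
    also have "\<dots> \<le> real D * real D / 2" using DK by (intro divide_right_mono mult_right_mono) auto
    finally show ?thesis by (simp add: power2_eq_square)
  qed
  then have PD: "(real D)\<^sup>2 / 2 \<le> real m * real P" using key by (simp add: algebra_simps)
  have "(real \<delta> * real a)\<^sup>2 \<le> (real D)\<^sup>2" using Dge by (intro power_mono) auto
  then have Pbig: "real \<delta> ^ 2 * real a * real a / (2 * real m) \<le> real P"
    using PD m0 by (simp add: field_simps power2_eq_square)
  have "\<exists>y\<in>A. real P / real a \<le> real (card {z\<in>A. Rc E y z})"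
  proof (rule ccontr)
    assume "\<not> (\<exists>y\<in>A. real P / real a \<le> real (card {z\<in>A. Rc E y z}))"
    then have "\<forall>y\<in>A. real (card {z\<in>A. Rc E y z}) < real P / real a" by force
    then have "(\<Sum>y\<in>A. real (card {z\<in>A. Rc E y z})) < (\<Sum>y\<in>A. real P / real a)"
      using a0 a_def finA by (intro sum_strict_mono) auto
    also have "\<dots> = real P" using a0 a_def by simp
    finally show False by (simp add: P_def)
  qed
  then obtain y where y: "y \<in> A" "real P / real a \<le> real (card {z\<in>A. Rc E y z})" by blast
  have "real \<delta> ^ 2 / (2 * real m) * real a = real \<delta> ^ 2 * real a * real a / (2 * real m) / real a" using a0 by simp
  also have "\<dots> \<le> real P / real a" using Pbig a0 by (intro divide_right_mono) auto
  finally have "real \<delta> ^ 2 / (2 * real m) * real a \<le> real (card {z\<in>A. Rc E y z})" using y(2) by linarith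
  then show ?thesis using y(1) a_def m_def by blast
qed


context cont begin

lemma container_count:
  assumes kb: "\<And>S. S \<subseteq> W \<Longrightarrow> (\<forall>a\<in>S. \<forall>b\<in>S. \<not> R a b) \<Longrightarrow> card (fst (alg R T \<beta> S (card W) W)) \<le> k"
    and Bb: "\<And>F. real (card {X. X \<subseteq> snd (alg R T \<beta> F (card W) W) \<and> card X \<le> d}) \<le> B"
  shows "real (card {S. S \<subseteq> W \<and> (\<forall>a\<in>S. \<forall>b\<in>S. \<not> R a b) \<and> card S \<le> d}) \<le> real ((card W + 1) ^ k) * B"
proof -
  define N where "N = card W"
  define Fs where "Fs = {F. F \<subseteq> W \<and> card F \<le> k}"
  define Xs where "Xs F = {X. X \<subseteq> snd (alg R T \<beta> F N W) \<and> card X \<le> d}" for F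
  have sub: "{S. S \<subseteq> W \<and> (\<forall>a\<in>S. \<forall>b\<in>S. \<not> R a b) \<and> card S \<le> d} \<subseteq> (\<Union>F\<in>Fs. (\<lambda>X. F \<union> X) ` Xs F)"
  proof
    fix S assume "S \<in> {S. S \<subseteq> W \<and> (\<forall>a\<in>S. \<forall>b\<in>S. \<not> R a b) \<and> card S \<le> d}"
    then have S: "S \<subseteq> W" "\<And>a b. a \<in> S \<Longrightarrow> b \<in> S \<Longrightarrow> \<not> R a b" "card S \<le> d" by auto
    define F where "F = fst (alg R T \<beta> S N W)"
    have FS: "F \<subseteq> S" using alg_sub[where A=W and P=S and n=N] F_def by auto
    have cov: "S \<subseteq> F \<union> snd (alg R T \<beta> S N W)" using alg_cover[where P=S and A=W and n=N, OF S(2)] S(1) F_def by auto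
    have det: "alg R T \<beta> F N W = alg R T \<beta> S N W" using alg_det[where A=W and P=S and n=N and Q=F] F_def FS by auto
    have finS: "finite S" using S(1) finW finite_subset by blast
    have "F \<in> Fs" unfolding Fs_def using FS S(1) kb[OF S(1)] S(2) F_def N_def by auto
    moreover have "S - F \<in> Xs F"
    proof -
      have "S - F \<subseteq> snd (alg R T \<beta> F N W)" using cov det by auto
      moreover have "card (S - F) \<le> d" using S(3) card_mono[OF finS, of "S - F"] by auto
      ultimately show ?thesis unfolding Xs_def by auto
    qed
    moreover have "S = F \<union> (S - F)" using FS by auto
    ultimately show "S \<in> (\<Union>F\<in>Fs. (\<lambda>X. F \<union> X) ` Xs F)" by blast
  qed
  have finXs: "finite (Xs F)" for F
  proof -
    have "snd (alg R T \<beta> F N W) \<subseteq> W" using alg_sub[where A=W and P=F and n=N] by auto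
    then have "finite (snd (alg R T \<beta> F N W))" using finW by (simp add: finite_subset)
    then show ?thesis unfolding Xs_def by simp
  qed
  have finFs: "finite Fs" unfolding Fs_def using finW by simp
  have "card {S. S \<subseteq> W \<and> (\<forall>a\<in>S. \<forall>b\<in>S. \<not> R a b) \<and> card S \<le> d} \<le> card (\<Union>F\<in>Fs. (\<lambda>X. F \<union> X) ` Xs F)"
  proof (rule card_mono[OF _ sub])
    show "finite (\<Union>F\<in>Fs. (\<lambda>X. F \<union> X) ` Xs F)" by (intro finite_UN_I finite_imageI finFs finXs)
  qed
  also have "\<dots> \<le> (\<Sum>F\<in>Fs. card ((\<lambda>X. F \<union> X) ` Xs F))" by (rule card_UN_le[OF finFs])
  also have "\<dots> \<le> (\<Sum>F\<in>Fs. card (Xs F))" by (rule sum_mono) (rule card_image_le[OF finXs])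
  finally have c1: "real (card {S. S \<subseteq> W \<and> (\<forall>a\<in>S. \<forall>b\<in>S. \<not> R a b) \<and> card S \<le> d}) \<le> (\<Sum>F\<in>Fs. real (card (Xs F)))"
    unfolding of_nat_sum[symmetric] of_nat_le_iff .
  also have "\<dots> \<le> (\<Sum>F\<in>Fs. B)" by (rule sum_mono) (use Bb N_def Xs_def in auto)
  also have "\<dots> = real (card Fs) * B" by simp
  also have "\<dots> \<le> real ((card W + 1) ^ k) * B"
  proof (rule mult_right_mono)
    show "real (card Fs) \<le> real ((card W + 1) ^ k)" unfolding of_nat_le_iff Fs_def by (rule card_fp[OF finW])
    have "0 \<le> real (card {X. X \<subseteq> snd (alg R T \<beta> {} (card W) W) \<and> card X \<le> d})" by simp
    then show "0 \<le> B" using Bb[of "{}"] by linarith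
  qed
  finally show ?thesis .
qed

end


lemma ln4_le:
  fixes x :: real assumes x: "1 \<le> x"
  shows "(ln x) ^ 4 \<le> 256 * x"
proof -
  define y where "y = sqrt (sqrt x)"
  have y1: "1 \<le> y" using x unfolding y_def by simp
  have y2: "y ^ 2 = sqrt x" unfolding y_def using x by simp
  have "y ^ 4 = (y ^ 2) ^ 2" by (simp flip: power_mult)
  then have y4: "y ^ 4 = x" using y2 x by simp
  have "ln x = ln (y ^ 4)" using y4 by simp
  also have "\<dots> = 4 * ln y" using y1 by (simp add: ln_realpow)
  finally have lx: "ln x = 4 * ln y" .
  have ly: "0 \<le> ln y" "ln y \<le> y" using y1 ln_le_minus_one[of y] by auto
  have "(ln x) ^ 4 = 256 * (ln y) ^ 4" using lx by simp
  also have "\<dots> \<le> 256 * y ^ 4" using ly by (simp add: power_mono)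
  finally show ?thesis using y4 by simp
qed

lemma pow_le_1p4:
  fixes L :: real assumes "0 \<le> L" "j \<le> 4"
  shows "L ^ j \<le> 1 + L ^ 4"
proof (cases "L \<le> 1")
  case True
  then have "L ^ j \<le> 1" using assms by (simp add: power_le_one)
  then show ?thesis using zero_le_power[OF assms(1), of 4] by linarith
next
  case False
  then have "L ^ j \<le> L ^ 4" using assms by (intro power_increasing) auto
  then show ?thesis by simp
qed

lemma poly_bound:
  fixes L x :: real assumes L: "0 \<le> L" and x: "1 \<le> x" and L4: "L ^ 4 \<le> 256 * x"
  shows "(1 + 2 * L + 16 * L ^ 3) * (1 + 2 * L) \<le> 14400 * x"
proof -
  have e: "(1 + 2 * L + 16 * L ^ 3) * (1 + 2 * L) = 1 + 4 * L + 4 * L ^ 2 + 16 * L ^ 3 + 32 * L ^ 4"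
    by (simp add: algebra_simps power2_eq_square power3_eq_cube power4_eq_xxxx)
  have "L ^ 1 \<le> 1 + L ^ 4" "L ^ 2 \<le> 1 + L ^ 4" "L ^ 3 \<le> 1 + L ^ 4"
    using pow_le_1p4[OF L, of 1] pow_le_1p4[OF L, of 2] pow_le_1p4[OF L, of 3] by auto
  then have "1 + 4 * L + 4 * L ^ 2 + 16 * L ^ 3 + 32 * L ^ 4 \<le> 25 + 56 * L ^ 4" by simp
  also have "\<dots> \<le> 25 * x + 56 * (256 * x)" using x L4 by simp
  finally show ?thesis using e x by linarith
qed


lemma pow_exp_ln: "0 < (x::real) \<Longrightarrow> x ^ n = exp (real n * ln x)"
  by (simp add: exp_of_nat_mult)

definition links :: "nat set set \<Rightarrow> nat set \<Rightarrow> nat set set" where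
  "links E W = {S. S \<subseteq> W \<and> (\<forall>x\<in>S. \<forall>y\<in>S. \<not> Rc E x y) \<and> (\<forall>u\<in>W. card S \<le> card (nb E u) + 1)}"

lemma link_bound:
  assumes G: "E \<in> gclass K W" and finW: "finite W"
  shows "real (card (links E W)) \<le> exp ((14404 + 2 * real K) * sqrt (real (card W)))"
proof (cases "W = {}")
  case True
  then have "links E W = {{}}" unfolding links_def by auto
  then show ?thesis by simp
next
  case Wne: False
  define m where "m = card W"
  have m1: "1 \<le> m" using Wne finW m_def by (simp add: Suc_le_eq card_gt_0_iff)
  define x where "x = sqrt (real m)"
  have x1: "1 \<le> x" using m1 x_def by simp
  have xm: "x * x = real m" using x_def by simp
  define L where "L = ln x"
  have L0: "0 \<le> L" using x1 L_def by simp
  have lnm: "ln (real m) = 2 * L"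
  proof -
    have "ln (real m) = ln (x * x)" using xm by simp
    also have "\<dots> = ln x + ln x" using x1 by (simp add: ln_mult)
    finally show ?thesis using L_def by simp
  qed
  define \<delta> where "\<delta> = Min ((\<lambda>u. card (nb E u)) ` W)"
  have mind: "\<And>u. u \<in> W \<Longrightarrow> \<delta> \<le> card (nb E u)" unfolding \<delta>_def using finW by simp
  have "\<delta> \<in> (\<lambda>u. card (nb E u)) ` W" unfolding \<delta>_def by (rule Min_in) (use finW Wne in auto)
  then obtain u0 where u0: "u0 \<in> W" "card (nb E u0) = \<delta>" by auto
  have \<delta>m: "\<delta> \<le> m"
    using u0 card_mono[OF finW gclass_nbV[OF G, of u0]] m_def by simp
  define d where "d = \<delta> + 1"
  define LS where "LS = {S. S \<subseteq> W \<and> (\<forall>a\<in>S. \<forall>b\<in>S. \<not> Rc E a b) \<and> card S \<le> d}"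
  have sub: "links E W \<subseteq> LS" unfolding links_def LS_def d_def using u0 by fastforce
  have finLS: "finite LS" unfolding LS_def using finW by simp
  have cLS: "real (card (links E W)) \<le> real (card LS)" using card_mono[OF finLS sub] by simp
  define C where "C = 14404 + 2 * real K"
  show ?thesis
  proof (cases "real d * L \<le> x")
    case True
    have "LS \<subseteq> {S. S \<subseteq> W \<and> card S \<le> d}" unfolding LS_def by auto
    then have "card LS \<le> card {S. S \<subseteq> W \<and> card S \<le> d}"
      by (rule card_mono[rotated]) (use finW in simp)
    then have "real (card LS) \<le> real (card {S. S \<subseteq> W \<and> card S \<le> d})" by simp
    also have "\<dots> \<le> exp ((1 / x) * card W) / (1 / x) ^ d"
      by (rule card_small_subsets[OF finW]) (use x1 in auto)
    also have "\<dots> = exp x * x ^ d" using xm x1 m_def by (simp add: power_one_over field_simps)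
    also have "x ^ d = exp (real d * L)" using x1 L_def by (simp add: pow_exp_ln)
    also have "exp x * exp (real d * L) \<le> exp x * exp x" using True by simp
    also have "\<dots> = exp (2 * x)" by (simp add: exp_add[symmetric])
    also have "\<dots> \<le> exp (C * sqrt (real (card W)))" using C_def x_def m_def x1 by simp
    finally show ?thesis using cLS unfolding C_def by linarith
  next
    case False
    then have dL: "x < real d * L" by simp
    have Lpos: "0 < L" using dL x1 L0 by (cases "L = 0") auto
    have \<delta>1: "1 \<le> \<delta>"
    proof (rule ccontr)
      assume "\<not> 1 \<le> \<delta>"
      then have "d = 1" using d_def by simp
      then have "x < L" using dL by simp
      moreover have "L < x" using ln_less_self[of x] x1 L_def by simp
      ultimately show False by simp
    qed
    have dd: "real d \<le> 2 * real \<delta>" using d_def \<delta>1 by simp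
    have "x < 2 * real \<delta> * L" using dL dd Lpos by (smt (verit) mult_right_mono)
    then have x2: "x / (2 * L) < real \<delta>" using Lpos by (simp add: field_simps)
    have mdd: "real m / (real \<delta>)\<^sup>2 < 4 * L ^ 2"
    proof -
      have "(x / (2 * L))\<^sup>2 < (real \<delta>)\<^sup>2" using x2 x1 Lpos by (intro power_strict_mono) auto
      then have "real m / (4 * L ^ 2) < (real \<delta>)\<^sup>2" using xm by (simp add: power2_eq_square field_simps)
      then show ?thesis using Lpos \<delta>1 by (simp add: field_simps)
    qed
    define \<beta> where "\<beta> = min ((real \<delta>)\<^sup>2 / (2 * real m)) 1"
    define T where "T = 2 * (real K + 1) * real m / real \<delta>"
    have T2: "2 \<le> T"
    proof -
      have "real m / real \<delta> \<ge> 1" using \<delta>m \<delta>1 by simp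
      then have "2 * 1 \<le> 2 * (real K + 1) * (real m / real \<delta>)"
        by (intro mult_mono) auto
      then show ?thesis unfolding T_def by simp
    qed
    have \<beta>pos: "0 < \<beta>" unfolding \<beta>_def using \<delta>1 m1 by simp
    interpret cont "Rc E" T \<beta> W
    proof
      show "finite W" by fact
      show "0 < T" using T2 by simp
      show "\<beta> \<le> 1" unfolding \<beta>_def by simp
      fix A assume A: "A \<subseteq> W" "T \<le> real (card A)"
      obtain y where y: "y \<in> A" "real \<delta> ^ 2 / (2 * real (card W)) * real (card A) \<le> real (card {z\<in>A. Rc E y z})"
        using supersat[OF G finW Wne \<delta>1 mind A(1)] A(2) T_def m_def by auto
      have "\<beta> * real (card A) \<le> real \<delta> ^ 2 / (2 * real (card W)) * real (card A)"
        unfolding \<beta>_def m_def by (intro mult_right_mono) auto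
      then show "\<exists>y\<in>A. \<beta> * real (card A) \<le> real (card {z\<in>A. Rc E y z})" using y by force
    qed
    define \<kappa> where "\<kappa> = 1 + 2 * L + 16 * L ^ 3"
    define k where "k = nat \<lfloor>\<kappa>\<rfloor>"
    have kb: "card (fst (alg (Rc E) T \<beta> S (card W) W)) \<le> k"
      if S: "S \<subseteq> W" for S
    proof (cases "card (fst (alg (Rc E) T \<beta> S (card W) W))")
      case 0 then show ?thesis by simp
    next
      case (Suc j)
      have Tj: "T \<le> (1 - \<beta>) ^ j * real m" using alg_count[OF _ Suc] m_def by simp
      have "(1 - \<beta>) ^ j \<le> exp (- \<beta>) ^ j"
        by (rule power_mono) (use exp_ge_add_one_self[of "- \<beta>"] \<beta>_def in auto)
      also have "\<dots> = exp (- (\<beta> * j))" by (simp add: exp_of_nat_mult[symmetric] mult.commute)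
      finally have "T \<le> exp (- (\<beta> * j)) * real m" using Tj m1 by (meson mult_right_mono of_nat_0_le_iff order_trans)
      then have "1 \<le> exp (- (\<beta> * j)) * real m" using T2 by linarith
      then have "exp (\<beta> * j) \<le> real m" by (simp add: exp_minus field_simps)
      then have "\<beta> * j \<le> ln (real m)" using m1 by (metis exp_le_cancel_iff exp_ln of_nat_0_less_iff less_le_trans zero_less_one)
      then have bj: "\<beta> * j \<le> 2 * L" using lnm by simp
      have ib: "1 / \<beta> \<le> 1 + 8 * L ^ 2"
      proof (cases "(real \<delta>)\<^sup>2 / (2 * real m) \<le> 1")
        case True
        then have "1 / \<beta> = 2 * (real m / (real \<delta>)\<^sup>2)" unfolding \<beta>_def using \<delta>1 by simp
        then show ?thesis using mdd by simp
      next
        case False then show ?thesis unfolding \<beta>_def using L0 by simp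
      qed
      have "real j \<le> 2 * L * (1 / \<beta>)" using bj \<beta>pos by (simp add: field_simps)
      also have "\<dots> \<le> 2 * L * (1 + 8 * L ^ 2)" using ib L0 by (intro mult_left_mono) auto
      finally have "real (Suc j) \<le> \<kappa>" unfolding \<kappa>_def by (simp add: algebra_simps power3_eq_cube power2_eq_square)
      then show ?thesis using Suc k_def by linarith
    qed
    define B where "B = exp ((2 * real K + 4) * x)"
    have Bb: "real (card {X. X \<subseteq> snd (alg (Rc E) T \<beta> F (card W) W) \<and> card X \<le> d}) \<le> B" for F
    proof -
      define Cs where "Cs = snd (alg (Rc E) T \<beta> F (card W) W)"
      have CsW: "Cs \<subseteq> W" using alg_sub[where A=W and P=F and n="card W"] Cs_def by auto
      have finCs: "finite Cs" using CsW finW finite_subset by blast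
      have tT: "real (card Cs) < T" using alg_small[where A=W and P=F and n="card W"] Cs_def by simp
      show ?thesis
      proof (cases "real \<delta> \<le> x")
        case True
        define lam where "lam = real \<delta> / x"
        have l: "0 < lam" "lam \<le> 1" using True \<delta>1 x1 lam_def by auto
        have "real (card {X. X \<subseteq> Cs \<and> card X \<le> d}) \<le> exp (lam * card Cs) / lam ^ d"
          by (rule card_small_subsets[OF finCs l])
        also have "\<dots> \<le> exp (2 * (real K + 1) * x) * exp (2 * x)"
        proof -
          have "lam * card Cs \<le> lam * T" using tT l by simp
          also have "lam * T = 2 * (real K + 1) * x" unfolding lam_def T_def xm[symmetric] using \<delta>1 x1
            by (simp add: field_simps)
          finally have e1: "exp (lam * card Cs) \<le> exp (2 * (real K + 1) * x)" by simp
          have "1 / lam ^ d = (x / real \<delta>) ^ d" unfolding lam_def by (simp add: power_divide)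
          also have "\<dots> = exp (real d * ln (x / real \<delta>))" using x1 \<delta>1
            by (intro pow_exp_ln) simp
          also have "\<dots> \<le> exp (real d * (x / real \<delta>))"
          proof -
            have "ln (x / real \<delta>) \<le> x / real \<delta>" using ln_le_minus_one[of "x / real \<delta>"] x1 \<delta>1 by simp
            then have "real d * ln (x / real \<delta>) \<le> real d * (x / real \<delta>)" by (rule mult_left_mono) simp
            then show ?thesis by simp
          qed
          also have "\<dots> \<le> exp (2 * x)"
          proof -
            have "real d * (x / real \<delta>) \<le> 2 * real \<delta> * (x / real \<delta>)" using dd x1 \<delta>1 by (intro mult_right_mono) auto
            also have "\<dots> = 2 * x" using \<delta>1 by simp
            finally show ?thesis by simp
          qed
          finally have e2: "1 / lam ^ d \<le> exp (2 * x)" .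
          have "exp (lam * card Cs) / lam ^ d = exp (lam * card Cs) * (1 / lam ^ d)" by simp
          also have "\<dots> \<le> exp (2 * (real K + 1) * x) * exp (2 * x)"
            using e1 e2 l by (intro mult_mono) auto
          finally show ?thesis .
        qed
        also have "\<dots> = B" unfolding B_def by (simp add: exp_add[symmetric] algebra_simps)
        finally show ?thesis using Cs_def by simp
      next
        case False
        have "real (card {X. X \<subseteq> Cs \<and> card X \<le> d}) \<le> exp ((1::real) * real (card Cs)) / (1::real) ^ d"
          by (rule card_small_subsets[OF finCs]) auto
        also have "\<dots> \<le> exp T" using tT by simp
        also have "T \<le> 2 * (real K + 1) * x"
        proof -
          have "x * x \<le> x * real \<delta>" using False x1 by (intro mult_left_mono) auto
          then have "real m / real \<delta> \<le> x" using xm x1 \<delta>1 by (simp add: field_simps)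
          then have "2 * (real K + 1) * (real m / real \<delta>) \<le> 2 * (real K + 1) * x" by (intro mult_left_mono) auto
          then show ?thesis unfolding T_def by simp
        qed
        then have "T \<le> (2 * real K + 4) * x" using x1 by (simp add: algebra_simps)
        then have "exp T \<le> B" unfolding B_def by simp
        finally show ?thesis using Cs_def by simp
      qed
    qed
    have "real (card LS) \<le> real ((card W + 1) ^ k) * B"
      unfolding LS_def by (rule container_count[OF kb Bb]) auto
    also have "real ((card W + 1) ^ k) \<le> exp (14400 * x)"
    proof -
      have "real ((card W + 1) ^ k) = (real m + 1) ^ k" using m_def by (simp add: add.commute)
      also have "\<dots> = exp (real k * ln (real m + 1))" by (intro pow_exp_ln) simp
      also have "\<dots> \<le> exp (\<kappa> * (1 + 2 * L))"
      proof -
        have "ln (real m + 1) \<le> 1 + 2 * L"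
        proof -
          have "ln (real m + 1) \<le> ln (2 * real m)" using m1 by simp
          also have "\<dots> = ln 2 + 2 * L" using m1 lnm by (simp add: ln_mult)
          also have "ln 2 \<le> (1::real)" using ln_le_minus_one[of 2] by simp
          finally show ?thesis by simp
        qed
        moreover have "real k \<le> \<kappa>" unfolding k_def \<kappa>_def using L0 by simp
        moreover have "0 \<le> ln (real m + 1)" by simp
        moreover have "0 \<le> \<kappa>" unfolding \<kappa>_def using L0 by simp
        ultimately show ?thesis by (simp add: mult_mono)
      qed
      also have "\<dots> \<le> exp (14400 * x)"
        using poly_bound[OF L0 x1] ln4_le[OF x1] L_def \<kappa>_def by simp
      finally show ?thesis .
    qed
    then have "real ((card W + 1) ^ k) * B \<le> exp (14400 * x) * B"
      unfolding B_def by (intro mult_right_mono) auto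
    also have "\<dots> = exp (C * sqrt (real (card W)))"
      unfolding B_def C_def x_def m_def by (simp add: exp_add[symmetric] algebra_simps)
    finally show ?thesis using cLS unfolding C_def by linarith
  qed
qed


definition ext :: "nat \<times> nat set set \<times> nat set \<Rightarrow> nat set set" where
  "ext t = (case t of (v, E', S) \<Rightarrow> E' \<union> (\<lambda>s. {v, s}) ` S)"

lemma gclass_finite: "finite V \<Longrightarrow> finite (gclass K V)"
proof -
  assume f: "finite V"
  have "gclass K V \<subseteq> Pow (Pow V)" unfolding gclass_def by auto
  then show ?thesis using f by (meson finite_Pow_iff finite_subset)
qed

lemma links_finite: "finite W \<Longrightarrow> finite (links E W)"
  unfolding links_def by simp

lemma decomp:
  assumes G: "E \<in> gclass K V" and finV: "finite V" and v: "v \<in> V"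
    and vmin: "\<And>u. u \<in> V \<Longrightarrow> card (nb E v) \<le> card (nb E u)"
  shows "E = ext (v, {p\<in>E. v \<notin> p}, nb E v)"
    "{p\<in>E. v \<notin> p} \<in> gclass K (V - {v})"
    "nb E v \<in> links {p\<in>E. v \<notin> p} (V - {v})"
proof -
  define E' where "E' = {p\<in>E. v \<notin> p}"
  have Esub: "E \<subseteq> {p. p \<subseteq> V \<and> card p = 2}" using G unfolding gclass_def by auto
  have QE: "\<And>x y. x \<noteq> y \<Longrightarrow> {x,y} \<notin> E \<Longrightarrow> card (nb E x \<inter> nb E y) \<le> 1" using G unfolding gclass_def by auto
  have Q2E: "\<And>x y. {x,y} \<in> E \<Longrightarrow> card (nb E x \<inter> nb E y) \<le> K" using G unfolding gclass_def by auto
  have finnb: "finite (nb E x)" for x using gclass_nbV[OF G] finV finite_subset by blast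
  have nbE': "nb E' x \<subseteq> nb E x" for x unfolding nb_def E'_def by auto
  show "E = ext (v, {p\<in>E. v \<notin> p}, nb E v)"
  proof
    show "E \<subseteq> ext (v, {p\<in>E. v \<notin> p}, nb E v)"
    proof
      fix p assume p: "p \<in> E"
      show "p \<in> ext (v, {p\<in>E. v \<notin> p}, nb E v)"
      proof (cases "v \<in> p")
        case False then show ?thesis using p unfolding ext_def by auto
      next
        case True
        have "card p = 2" using p Esub by auto
        then obtain a b where ab: "p = {a,b}" "a \<noteq> b" by (meson card_2_iff)
        then have "p = {v, (if a = v then b else a)}" using True by auto
        moreover then have "(if a = v then b else a) \<in> nb E v" using p unfolding nb_def by simp
        ultimately show ?thesis unfolding ext_def by auto
      qed
    qed
    show "ext (v, {p\<in>E. v \<notin> p}, nb E v) \<subseteq> E" unfolding ext_def nb_def by auto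
  qed
  show "{p\<in>E. v \<notin> p} \<in> gclass K (V - {v})"
    unfolding E'_def[symmetric] gclass_def
  proof (intro CollectI conjI allI impI)
    show "E' \<subseteq> {p. p \<subseteq> V - {v} \<and> card p = 2}" using Esub unfolding E'_def by auto
  next
    fix x y assume xy: "x \<noteq> y \<and> {x,y} \<notin> E'"
    show "card (nb E' x \<inter> nb E' y) \<le> 1"
    proof (cases "{x,y} \<in> E")
      case False
      then have "card (nb E x \<inter> nb E y) \<le> 1" using QE xy by auto
      moreover have "card (nb E' x \<inter> nb E' y) \<le> card (nb E x \<inter> nb E y)"
        by (rule card_mono) (use finnb nbE' in auto)
      ultimately show ?thesis by simp
    next
      case True
      then have "v = x \<or> v = y" using xy unfolding E'_def by auto
      moreover have "nb E' v = {}" unfolding nb_def E'_def by auto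
      ultimately have "nb E' x \<inter> nb E' y = {}" by auto
      then show ?thesis by simp
    qed
  next
    fix x y assume xy: "{x,y} \<in> E'"
    then have "card (nb E x \<inter> nb E y) \<le> K" using Q2E unfolding E'_def by auto
    moreover have "card (nb E' x \<inter> nb E' y) \<le> card (nb E x \<inter> nb E y)"
      by (rule card_mono) (use finnb nbE' in auto)
    ultimately show "card (nb E' x \<inter> nb E' y) \<le> K" by simp
  qed
  show "nb E v \<in> links {p\<in>E. v \<notin> p} (V - {v})"
    unfolding E'_def[symmetric] links_def
  proof (intro CollectI conjI ballI)
    show "nb E v \<subseteq> V - {v}" using gclass_nb[OF G] by blast
  next
    fix x y assume x: "x \<in> nb E v" and y: "y \<in> nb E v"
    show "\<not> Rc E' x y"
    proof
      assume R: "Rc E' x y"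
      then obtain z where z: "z \<in> nb E' x" "z \<in> nb E' y" and xy: "x \<noteq> y" "{x,y} \<notin> E'"
        unfolding Rc_def by auto
      have zv: "z \<noteq> v" using z(1) unfolding nb_def E'_def by auto
      have xv: "x \<noteq> v" "y \<noteq> v" using x y gclass_nb[OF G] by blast+
      have nxy: "{x,y} \<notin> E" using xy(2) xv unfolding E'_def by auto
      have "{v, z} \<subseteq> nb E x \<inter> nb E y" using x y z nbE' nb_sym by blast
      then have "card {v, z} \<le> card (nb E x \<inter> nb E y)" by (rule card_mono[rotated]) (use finnb in simp)
      then have "2 \<le> card (nb E x \<inter> nb E y)" using zv by simp
      then show False using QE[OF xy(1) nxy] by simp
    qed
  next
    fix u assume u: "u \<in> V - {v}"
    have "nb E u \<subseteq> insert v (nb E' u)" unfolding nb_def E'_def using u by auto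
    then have "card (nb E u) \<le> card (insert v (nb E' u))" by (rule card_mono[rotated]) (use finnb nbE' finite_subset in blast)
    also have "\<dots> \<le> card (nb E' u) + 1" by (simp add: card_insert_le_m1 card_insert_if)
    finally show "card (nb E v) \<le> card (nb E' u) + 1" using vmin[of u] u by simp
  qed
qed


lemma np1_le: "real n + 1 \<le> exp (2 * sqrt (real n))"
proof -
  have "1 + sqrt (real n) \<le> exp (sqrt (real n))" by (rule exp_ge_add_one_self)
  then have "(1 + sqrt (real n))\<^sup>2 \<le> (exp (sqrt (real n)))\<^sup>2" by (intro power_mono) auto
  also have "\<dots> = exp (2 * sqrt (real n))" by (simp add: power2_eq_square exp_add[symmetric])
  finally have "(1 + sqrt (real n))\<^sup>2 \<le> exp (2 * sqrt (real n))" .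
  moreover have "real n + 1 \<le> (1 + sqrt (real n))\<^sup>2"
    by (simp add: power2_eq_square algebra_simps)
  ultimately show ?thesis by linarith
qed

lemma gcount:
  "finite V \<Longrightarrow> card V = n \<Longrightarrow>
   real (card (gclass K V)) \<le> exp ((14406 + 2 * real K) * real n * sqrt (real n))"
proof (induction n arbitrary: V)
  case 0
  then have "V = {}" by simp
  then have "gclass K V \<subseteq> {{}}" unfolding gclass_def by auto
  then have "card (gclass K V) \<le> card {{}::nat set set}" by (rule card_mono[rotated]) simp
  then have "card (gclass K V) \<le> 1" by simp
  then show ?case by simp
next
  case (Suc n)
  define Cl where "Cl = 14404 + 2 * real K"
  have Vne: "V \<noteq> {}" using Suc.prems by auto
  define mv where "mv E = (SOME v. v \<in> V \<and> (\<forall>u\<in>V. card (nb E v) \<le> card (nb E u)))" for E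
  have mv: "mv E \<in> V \<and> (\<forall>u\<in>V. card (nb E (mv E)) \<le> card (nb E u))" for E
  proof -
    define \<delta> where "\<delta> = Min ((\<lambda>u. card (nb E u)) ` V)"
    have "\<delta> \<in> (\<lambda>u. card (nb E u)) ` V" unfolding \<delta>_def by (rule Min_in) (use Suc.prems Vne in auto)
    then obtain u0 where "u0 \<in> V" "card (nb E u0) = \<delta>" by auto
    moreover have "\<forall>u\<in>V. \<delta> \<le> card (nb E u)" unfolding \<delta>_def using Suc.prems by simp
    ultimately have "u0 \<in> V \<and> (\<forall>u\<in>V. card (nb E u0) \<le> card (nb E u))" by simp
    then have "\<exists>v. v \<in> V \<and> (\<forall>u\<in>V. card (nb E v) \<le> card (nb E u))" by blast
    then show ?thesis unfolding mv_def by (rule someI_ex)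
  qed
  define Sg where "Sg = (SIGMA v:V. SIGMA E':gclass K (V - {v}). links E' (V - {v}))"
  have sub: "gclass K V \<subseteq> ext ` Sg"
  proof
    fix E assume E: "E \<in> gclass K V"
    let ?v = "mv E"
    have d: "E = ext (?v, {p\<in>E. ?v \<notin> p}, nb E ?v)"
        "{p\<in>E. ?v \<notin> p} \<in> gclass K (V - {?v})"
        "nb E ?v \<in> links {p\<in>E. ?v \<notin> p} (V - {?v})"
      using decomp[OF E Suc.prems(1), of ?v] mv[of E] by auto
    have "(?v, {p\<in>E. ?v \<notin> p}, nb E ?v) \<in> Sg" unfolding Sg_def using mv[of E] d(2,3) by simp
    then show "E \<in> ext ` Sg" using d(1) by (rule rev_image_eqI)
  qed
  have finV: "finite V" by fact
  have finI: "finite (gclass K (V - {v}))" for v using gclass_finite finV by blast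
  have finL: "finite (links E' (V - {v}))" for E' v using links_finite finV by blast
  have cardSg: "card Sg = (\<Sum>v\<in>V. \<Sum>E'\<in>gclass K (V - {v}). card (links E' (V - {v})))"
    unfolding Sg_def using finV finI finL by (simp add: card_SigmaI finite_SigmaI)
  have finSg: "finite Sg" unfolding Sg_def using finV finI finL by (simp add: finite_SigmaI)
  have "card (gclass K V) \<le> card (ext ` Sg)" by (rule card_mono[OF _ sub]) (use finSg in simp)
  also have "\<dots> \<le> card Sg" by (rule card_image_le[OF finSg])
  finally have c0: "card (gclass K V) \<le> (\<Sum>v\<in>V. \<Sum>E'\<in>gclass K (V - {v}). card (links E' (V - {v})))"
    unfolding cardSg .
  have c1: "real (card (gclass K V)) \<le> (\<Sum>v\<in>V. \<Sum>E'\<in>gclass K (V - {v}). real (card (links E' (V - {v}))))"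
  proof -
    have "real (card (gclass K V)) \<le> real (\<Sum>v\<in>V. \<Sum>E'\<in>gclass K (V - {v}). card (links E' (V - {v})))"
      using c0 by (simp only: of_nat_le_iff)
    then show ?thesis by simp
  qed
  have cv: "card (V - {v}) = n" if "v \<in> V" for v using Suc.prems that by simp
  have "(\<Sum>v\<in>V. \<Sum>E'\<in>gclass K (V - {v}). real (card (links E' (V - {v}))))
      \<le> (\<Sum>v\<in>V. \<Sum>E'\<in>gclass K (V - {v}). exp (Cl * sqrt (real n)))"
  proof (intro sum_mono)
    fix v E' assume v: "v \<in> V" and E': "E' \<in> gclass K (V - {v})"
    show "real (card (links E' (V - {v}))) \<le> exp (Cl * sqrt (real n))"
      using link_bound[OF E'] finV cv[OF v] Cl_def by simp
  qed
  also have "\<dots> = (\<Sum>v\<in>V. real (card (gclass K (V - {v}))) * exp (Cl * sqrt (real n)))" by simp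
  also have "\<dots> \<le> (\<Sum>v\<in>V. exp ((14406 + 2 * real K) * real n * sqrt (real n)) * exp (Cl * sqrt (real n)))"
  proof (intro sum_mono mult_right_mono)
    fix v assume v: "v \<in> V"
    show "real (card (gclass K (V - {v}))) \<le> exp ((14406 + 2 * real K) * real n * sqrt (real n))"
      using Suc.IH[of "V - {v}"] finV cv[OF v] by simp
  qed simp
  also have "\<dots> = (real n + 1) * (exp ((14406 + 2 * real K) * real n * sqrt (real n)) * exp (Cl * sqrt (real n)))"
    using Suc.prems by simp
  also have "\<dots> \<le> exp (2 * sqrt (real n)) * (exp ((14406 + 2 * real K) * real n * sqrt (real n)) * exp (Cl * sqrt (real n)))"
    by (intro mult_right_mono np1_le) simp
  also have "\<dots> = exp ((14406 + 2 * real K) * real n * sqrt (real n) + (Cl + 2) * sqrt (real n))"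
    by (simp add: exp_add[symmetric] algebra_simps)
  also have "\<dots> \<le> exp ((14406 + 2 * real K) * real (Suc n) * sqrt (real (Suc n)))"
  proof -
    have s: "sqrt (real n) \<le> sqrt (real (Suc n))" by simp
    have "(14406 + 2 * real K) * real n * sqrt (real n) + (Cl + 2) * sqrt (real n)
        = (14406 + 2 * real K) * (real n + 1) * sqrt (real n)" unfolding Cl_def by (simp add: algebra_simps)
    also have "\<dots> \<le> (14406 + 2 * real K) * (real n + 1) * sqrt (real (Suc n))"
      by (intro mult_left_mono s) auto
    finally show ?thesis by (simp add: add.commute)
  qed
  finally show ?case using c1 by linarith
qed


lemma powr32: "real n powr (3/2) = real n * sqrt (real n)"
proof (cases "n = 0")
  case True then show ?thesis by simp
next
  case False
  have "real n powr (3/2) = real n powr (1 + 1/2)" by simp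
  also have "\<dots> = real n powr 1 * real n powr (1/2)" by (rule powr_add)
  also have "\<dots> = real n * sqrt (real n)" using False by (simp add: powr_half_sqrt)
  finally show ?thesis .
qed

theorem theorem1p8:
  fixes r :: nat
  assumes "r \<ge> 2"
  shows "\<exists>c::real. \<forall>n::nat.
    real (card {H :: nat set set. H \<subseteq> Pow {..<n} \<and> uniform r H \<and> girth_ge_5 H})
      \<le> 2 powr (c * real n powr (3/2))"
proof (intro exI allI)
  fix n :: nat
  define C where "C = 14406 + 2 * real r"
  define Fam where "Fam = {H :: nat set set. H \<subseteq> Pow {..<n} \<and> uniform r H \<and> girth_ge_5 H}"
  have into: "sh ` Fam \<subseteq> gclass r {..<n}"
  proof
    fix G assume "G \<in> sh ` Fam"
    then obtain H where H: "H \<in> Fam" "G = sh H" by auto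
    have HP: "H \<subseteq> Pow {..<n}" and u: "uniform r H" and g: "girth_ge_5 H" using H(1) Fam_def by auto
    show "G \<in> gclass r {..<n}" unfolding gclass_def H(2)
    proof (intro CollectI conjI allI impI)
      show "sh H \<subseteq> {p. p \<subseteq> {..<n} \<and> card p = 2}" using HP unfolding sh_def by blast
    next
      fix x y assume "x \<noteq> y \<and> {x, y} \<notin> sh H"
      then show "card (nb (sh H) x \<inter> nb (sh H) y) \<le> 1" using Q_sh[OF g] by auto
    next
      fix x y assume "{x, y} \<in> sh H"
      then show "card (nb (sh H) x \<inter> nb (sh H) y) \<le> r" using Q2_sh[OF g u] by auto
    qed
  qed
  have inj: "inj_on sh Fam"
  proof (rule inj_onI)
    fix H1 H2 assume h1: "H1 \<in> Fam" and h2: "H2 \<in> Fam" and e: "sh H1 = sh H2"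
    have "H1 = {e. finite e \<and> card e = r \<and> (\<forall>x\<in>e. \<forall>y\<in>e. x \<noteq> y \<longrightarrow> {x,y} \<in> sh H1)}"
      by (rule sh_inj[OF _ _ assms]) (use h1 Fam_def in auto)
    moreover have "H2 = {e. finite e \<and> card e = r \<and> (\<forall>x\<in>e. \<forall>y\<in>e. x \<noteq> y \<longrightarrow> {x,y} \<in> sh H2)}"
      by (rule sh_inj[OF _ _ assms]) (use h2 Fam_def in auto)
    ultimately
    show "H1 = H2" using e by simp
  qed
  have "card Fam \<le> card (gclass r {..<n})"
    by (rule card_inj_on_le[OF inj into]) (simp add: gclass_finite)
  then have "real (card Fam) \<le> real (card (gclass r {..<n}))" by simp
  also have "\<dots> \<le> exp (C * real n * sqrt (real n))" using gcount[of "{..<n}" n r] C_def by simp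
  also have "\<dots> = 2 powr (C / ln 2 * (real n * sqrt (real n)))"
    by (simp add: powr_def)
  also have "\<dots> = 2 powr (C / ln 2 * real n powr (3/2))"
    by (simp only: powr32)
  finally show "real (card {H :: nat set set. H \<subseteq> Pow {..<n} \<and> uniform r H \<and> girth_ge_5 H})
      \<le> 2 powr (C / ln 2 * real n powr (3/2))" unfolding Fam_def .
qed


end
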